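(* Let $k,n\ge1$ and $f:\{0,1,\dots,k\}^3\to\mathbb C$ arbitrary. For any triple $(\mathbf z^{[1]},\mathbf z^{[0]},\mathbf z^{[-1]})$ of $n$-bit strings with configuration basis numbers $\mathbf n=(n_s)_{s\in\{0,1\}^3}$, $$\mathbf E_\sigma f\Big(\sum_{(l,\nu)\in\sigma}z^{[1]}_l\oplus\nu,\ \sum_{(l,\nu)\in\sigma}z^{[0]}_l\oplus\nu,\ \sum_{(l,\nu)\in\sigma}z^{[-1]}_l\oplus\nu\Big)=2^{-k}\sum_{\mathbf k\in\mathcal P(k)}\binom{k}{\mathbf k}\Big(\prod_{s\in\{0,1\}^3}\Big(\frac{n_s+n_{\bar s}}{n}\Big)^{k_s}\Big)f\Big(\Big(\sum_{s\in\{0,1\}^3:\ s^{[t]}=1}k_s\Big)_{t\in\{1,0,-1\}}\Big).$$ In particular the average is a polynomial in $\mathbf n$.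
   Context: A random clause is $\sigma=((l_0,\nu_0),\dots,(l_{k-1},\nu_{k-1}))$ with each $l_q$ independent uniform in $\{0,\dots,n-1\}$ (repetitions allowed) and each $\nu_q$ independent uniform in $\{0,1\}$; sums over $(l,\nu)\in\sigma$ run over the $k$ pairs with multiplicity, and $\mathbf E_\sigma$ is expectation over $\sigma$. Configuration basis numbers: $n_s=|\{j:(z^{[1]}_j,z^{[0]}_j,z^{[-1]}_j)=s\}|$ for $s=s^{[1]}s^{[0]}s^{[-1]}\in\{0,1\}^3$; $\bar s$ is the bitwise complement. $\mathcal P(k)$ is the set of families $(k_s)_{s\in\{0,1\}^3}$ of nonnegative integers summing to $k$, and $\binom{k}{\mathbf k}=k!/\prod_s k_s!$. *)

theory Defs
  imports Complex_Main "HOL-Library.FuncSet"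
begin

type_synonym bit3 = "bool \<times> bool \<times> bool"

text \<open>Random clauses: a clause is a function q \<mapsto> (l_q, nu_q) on {0..<k},
  with l_q < n and nu_q a bit (True = 1). Uniform distribution = uniform on this finite set.\<close>
definition clauses :: "nat \<Rightarrow> nat \<Rightarrow> (nat \<Rightarrow> nat \<times> bool) set" where
  "clauses n k = {..<k} \<rightarrow>\<^sub>E ({..<n} \<times> (UNIV :: bool set))"

definition E_clause :: "nat \<Rightarrow> nat \<Rightarrow> ((nat \<Rightarrow> nat \<times> bool) \<Rightarrow> complex) \<Rightarrow> complex" where
  "E_clause n k F = (\<Sum>\<sigma>\<in>clauses n k. F \<sigma>) / of_nat (card (clauses n k))"

definition clause_sum :: "nat \<Rightarrow> (nat \<Rightarrow> bool) \<Rightarrow> (nat \<Rightarrow> nat \<times> bool) \<Rightarrow> nat" where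
  "clause_sum k z \<sigma> = (\<Sum>q<k. of_bool (z (fst (\<sigma> q)) \<noteq> snd (\<sigma> q)))"

definition config_num :: "nat \<Rightarrow> (nat \<Rightarrow> bool) \<Rightarrow> (nat \<Rightarrow> bool) \<Rightarrow> (nat \<Rightarrow> bool) \<Rightarrow> bit3 \<Rightarrow> nat" where
  "config_num n z1 z0 zm s = card {j. j < n \<and> (z1 j, z0 j, zm j) = s}"

definition bcomp :: "bit3 \<Rightarrow> bit3" where
  "bcomp s = (case s of (a, b, c) \<Rightarrow> (\<not> a, \<not> b, \<not> c))"

definition Pk :: "nat \<Rightarrow> (bit3 \<Rightarrow> nat) set" where
  "Pk k = {K. (\<Sum>s\<in>UNIV. K s) = k}"

definition multinom :: "nat \<Rightarrow> (bit3 \<Rightarrow> nat) \<Rightarrow> complex" where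
  "multinom k K = fact k / (\<Prod>s\<in>UNIV. fact (K s))"

end

theory Submission
  imports Defs
begin

lemma finite_Pk: "finite (Pk k)"
proof -
  have "Pk k \<subseteq> (\<lambda>K. K) ` (UNIV \<rightarrow>\<^sub>E {..k})"
  proof
    fix K assume "K \<in> Pk k"
    hence "\<And>s. K s \<le> k" unfolding Pk_def
    proof -
      fix s assume "K \<in> {K. (\<Sum>s\<in>UNIV. K s) = k}"
      hence e: "(\<Sum>s\<in>UNIV. K s) = k" by simp
      have "K s \<le> (\<Sum>s\<in>UNIV. K s)" by (rule member_le_sum) auto
      thus "K s \<le> k" using e by simp
    qed
    thus "K \<in> (\<lambda>K. K) ` (UNIV \<rightarrow>\<^sub>E {..k})" by auto
  qed
  moreover have "finite (UNIV \<rightarrow>\<^sub>E {..k::nat} :: (bit3 \<Rightarrow> nat) set)"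
    by (rule finite_PiE) auto
  ultimately show ?thesis by (meson finite_imageI finite_subset)
qed

lemma prod_upd:
  fixes h :: "bit3 \<Rightarrow> nat \<Rightarrow> 'b::comm_monoid_mult"
  shows "(\<Prod>t\<in>UNIV. h t ((K(s := v)) t)) = h s v * (\<Prod>t\<in>UNIV - {s}. h t (K t))"
proof -
  have "(\<Prod>t\<in>UNIV. h t ((K(s := v)) t)) = h s v * (\<Prod>t\<in>UNIV - {s}. h t ((K(s := v)) t))"
    by (subst prod.remove[of _ s]) auto
  also have "(\<Prod>t\<in>UNIV - {s}. h t ((K(s := v)) t)) = (\<Prod>t\<in>UNIV - {s}. h t (K t))"
    by (rule prod.cong) auto
  finally show ?thesis .
qed

lemma prod_split:
  fixes h :: "bit3 \<Rightarrow> nat \<Rightarrow> 'b::comm_monoid_mult"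
  shows "(\<Prod>t\<in>UNIV. h t (K t)) = h s (K s) * (\<Prod>t\<in>UNIV - {s}. h t (K t))"
  by (subst prod.remove[of _ s]) auto

lemma group_typ:
  fixes H :: "bit3 \<Rightarrow> complex"
  assumes "finite A"
  shows "(\<Sum>a\<in>A. H (typ a)) = (\<Sum>s\<in>UNIV. of_nat (card {a\<in>A. typ a = s}) * H s)"
proof -
  have "(\<Sum>a\<in>A. H (typ a)) = (\<Sum>a\<in>A. \<Sum>s\<in>UNIV. of_bool (typ a = s) * H s)"
  proof (rule sum.cong)
    fix x
    have "(\<Sum>s\<in>UNIV. of_bool (typ x = s) * H s) = (\<Sum>s\<in>UNIV. if typ x = s then H s else 0)"
      by (rule sum.cong) auto
    thus "H (typ x) = (\<Sum>s\<in>UNIV. of_bool (typ x = s) * H s)" by simp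
  qed simp
  also have "\<dots> = (\<Sum>s\<in>UNIV. \<Sum>a\<in>A. of_bool (typ a = s) * H s)" by (rule sum.swap)
  also have "\<dots> = (\<Sum>s\<in>UNIV. of_nat (card {a\<in>A. typ a = s}) * H s)"
    apply (rule sum.cong, simp)
    using assms by (simp add: sum_distrib_right[symmetric] of_bool_def sum.If_cases Int_def)
  finally show ?thesis .
qed

lemma card_count:
  fixes k :: nat and \<tau> :: "nat \<Rightarrow> 'a"
  shows "card {q. q < k \<and> \<tau> q = s} = (\<Sum>q<k. of_bool (\<tau> q = s))"
proof (induction k)
  case (Suc k)
  have e: "{q. q < Suc k \<and> \<tau> q = s} = {q. q < k \<and> \<tau> q = s} \<union> (if \<tau> k = s then {k} else {})"
    by (auto simp: less_Suc_eq)
  show ?case unfolding e using Suc by (auto simp: card_insert_if)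
qed simp

lemma count_sum:
  fixes P :: "bit3 \<Rightarrow> bool" and k :: nat
  shows "(\<Sum>q<k. of_bool (P (\<tau> q)) :: nat) = (\<Sum>s\<in>{s. P s}. card {q. q < k \<and> \<tau> q = s})"
proof -
  have "(\<Sum>s\<in>{s. P s}. card {q. q < k \<and> \<tau> q = s}) = (\<Sum>s\<in>{s. P s}. \<Sum>q<k. of_bool (\<tau> q = s))"
  proof (rule sum.cong)
    fix s
    show "card {q. q < k \<and> \<tau> q = s} = (\<Sum>q<k. of_bool (\<tau> q = s))"
      by (rule card_count)
  qed simp
  also have "\<dots> = (\<Sum>q<k. \<Sum>s\<in>{s. P s}. of_bool (\<tau> q = s))" by (rule sum.swap)
  also have "\<dots> = (\<Sum>q<k. of_bool (P (\<tau> q)))"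
    by (rule sum.cong) (auto simp: of_bool_def sum.If_cases)
  finally show ?thesis by simp
qed

lemma sum_upd:
  fixes K :: "bit3 \<Rightarrow> nat"
  shows "(\<Sum>t\<in>UNIV. (K(s := v)) t) + K s = (\<Sum>t\<in>UNIV. K t) + v"
proof -
  have a: "(\<Sum>t\<in>UNIV. (K(s := v)) t) = v + (\<Sum>t\<in>UNIV - {s}. (K(s := v)) t)"
    by (subst sum.remove[of _ s]) auto
  have b: "(\<Sum>t\<in>UNIV. K t) = K s + (\<Sum>t\<in>UNIV - {s}. K t)"
    by (subst sum.remove[of _ s]) auto
  have c: "(\<Sum>t\<in>UNIV - {s}. (K(s := v)) t) = (\<Sum>t\<in>UNIV - {s}. K t)"
    by (rule sum.cong) auto
  show ?thesis using a b c by simp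
qed

lemma bij_upd:
  "bij_betw (\<lambda>K. K(s := K s + 1)) (Pk k) {K'\<in>Pk (Suc k). 0 < K' s}"
proof (rule bij_betw_byWitness[where f'="\<lambda>K. K(s := K s - 1)"])
  show "\<forall>a\<in>Pk k. (a(s := a s + 1))(s := (a(s := a s + 1)) s - 1) = a" by auto
  show "\<forall>a'\<in>{K' \<in> Pk (Suc k). 0 < K' s}. (a'(s := a' s - 1))(s := (a'(s := a' s - 1)) s + 1) = a'"
    by auto
  show "(\<lambda>K. K(s := K s + 1)) ` Pk k \<subseteq> {K' \<in> Pk (Suc k). 0 < K' s}"
  proof
    fix K' assume "K' \<in> (\<lambda>K. K(s := K s + 1)) ` Pk k"
    then obtain K where K: "K \<in> Pk k" "K' = K(s := K s + 1)" by auto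
    have "(\<Sum>t\<in>UNIV. K' t) + K s = (\<Sum>t\<in>UNIV. K t) + (K s + 1)" using sum_upd[of K s "K s + 1"] K by simp
    thus "K' \<in> {K' \<in> Pk (Suc k). 0 < K' s}" using K by (auto simp: Pk_def)
  qed
  show "(\<lambda>K. K(s := K s - 1)) ` {K' \<in> Pk (Suc k). 0 < K' s} \<subseteq> Pk k"
  proof
    fix K assume "K \<in> (\<lambda>K. K(s := K s - 1)) ` {K' \<in> Pk (Suc k). 0 < K' s}"
    then obtain K' where K: "K' \<in> Pk (Suc k)" "0 < K' s" "K = K'(s := K' s - 1)" by auto
    have "(\<Sum>t\<in>UNIV. K t) + K' s = (\<Sum>t\<in>UNIV. K' t) + (K' s - 1)" using sum_upd[of K' s "K' s - 1"] K by simp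
    thus "K \<in> Pk k" using K by (auto simp: Pk_def)
  qed
qed

lemma key:
  fixes c :: "bit3 \<Rightarrow> complex" and G :: "(bit3 \<Rightarrow> nat) \<Rightarrow> complex"
  shows "c s * (\<Sum>K\<in>Pk k. multinom k K * (\<Prod>t\<in>UNIV. c t ^ K t) * G (K(s := K s + 1)))
   = (\<Sum>K'\<in>Pk (Suc k). of_nat (K' s) * (fact k / (\<Prod>t\<in>UNIV. fact (K' t))) * (\<Prod>t\<in>UNIV. c t ^ K' t) * G K')"
    (is "?L = (\<Sum>K'\<in>_. ?h K')")
proof -
  have "(\<Sum>K'\<in>Pk (Suc k). ?h K') = (\<Sum>K'\<in>{K'\<in>Pk (Suc k). 0 < K' s}. ?h K')"
    by (rule sum.mono_neutral_right) (auto simp: finite_Pk)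
  also have "\<dots> = (\<Sum>K\<in>Pk k. ?h (K(s := K s + 1)))"
    by (rule sum.reindex_bij_betw[OF bij_upd, symmetric])
  also have "\<dots> = (\<Sum>K\<in>Pk k. c s * (multinom k K * (\<Prod>t\<in>UNIV. c t ^ K t) * G (K(s := K s + 1))))"
  proof (rule sum.cong)
    fix K assume "K \<in> Pk k"
    define R where "R = (\<Prod>t\<in>UNIV - {s}. (fact (K t) :: complex))"
    define Q where "Q = (\<Prod>t\<in>UNIV - {s}. c t ^ K t)"
    have R0: "R \<noteq> 0" unfolding R_def by (simp add: prod_zero_iff)
    have f1: "(\<Prod>t\<in>UNIV. (fact ((K(s := K s + 1)) t) :: complex)) = fact (K s + 1) * R"
      unfolding R_def using prod_upd[of "\<lambda>t v. (fact v :: complex)" K s "K s + 1"] by simp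
    have f2: "(\<Prod>t\<in>UNIV. (fact (K t) :: complex)) = fact (K s) * R"
      unfolding R_def using prod_split[of "\<lambda>t v. (fact v :: complex)" K s] by simp
    have c1: "(\<Prod>t\<in>UNIV. c t ^ ((K(s := K s + 1)) t)) = c s ^ (K s + 1) * Q"
      unfolding Q_def using prod_upd[of "\<lambda>t v. c t ^ v" K s "K s + 1"] by simp
    have c2: "(\<Prod>t\<in>UNIV. c t ^ K t) = c s ^ K s * Q"
      unfolding Q_def using prod_split[of "\<lambda>t v. c t ^ v" K s] by simp
    have fs: "(fact (K s + 1) :: complex) = of_nat (K s + 1) * fact (K s)" by simp
    have fnz: "(fact (K s) :: complex) \<noteq> 0" by simp
    show "?h (K(s := K s + 1)) = c s * (multinom k K * (\<Prod>t\<in>UNIV. c t ^ K t) * G (K(s := K s + 1)))"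
      unfolding multinom_def f1 f2 c1 c2 fs using R0 fnz
      by (simp add: field_simps del: of_nat_Suc)
  qed simp
  also have "\<dots> = ?L" by (simp add: sum_distrib_left)
  finally show ?thesis by simp
qed

lemma Pk0: "Pk 0 = {\<lambda>_. 0}"
  unfolding Pk_def by (auto simp: fun_eq_iff)

lemma multi:
  fixes A :: "'a set" and tp :: "'a \<Rightarrow> bit3" and G :: "(bit3 \<Rightarrow> nat) \<Rightarrow> complex"
  assumes fin: "finite A"
  shows "(\<Sum>\<sigma>\<in>{..<k} \<rightarrow>\<^sub>E A. G (\<lambda>s. card {q. q < k \<and> tp (\<sigma> q) = s}))
    = (\<Sum>K\<in>Pk k. multinom k K * (\<Prod>t\<in>UNIV. (of_nat (card {a\<in>A. tp a = t}) :: complex) ^ K t) * G K)"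
proof (induction k arbitrary: G)
  case 0
  show ?case by (simp add: Pk0 multinom_def)
next
  case (Suc k)
  define c where "c t = (of_nat (card {a\<in>A. tp a = t}) :: complex)" for t
  define cnt where "cnt \<sigma> = (\<lambda>s. card {q. q < k \<and> tp (\<sigma> q) = s})" for \<sigma> :: "nat \<Rightarrow> 'a"
  have cnt_upd: "(\<lambda>s. card {q. q < Suc k \<and> tp ((\<sigma>(k := a)) q) = s}) = (cnt \<sigma>)(tp a := cnt \<sigma> (tp a) + 1)"
    for \<sigma> a
  proof
    fix s
    have e: "{q. q < Suc k \<and> tp ((\<sigma>(k := a)) q) = s} = {q. q < k \<and> tp (\<sigma> q) = s} \<union> (if tp a = s then {k} else {})"
      by (auto simp: less_Suc_eq)
    show "card {q. q < Suc k \<and> tp ((\<sigma>(k := a)) q) = s} = ((cnt \<sigma>)(tp a := cnt \<sigma> (tp a) + 1)) s"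
      unfolding e cnt_def by (auto simp: card_insert_if)
  qed
  have "(\<Sum>\<sigma>\<in>{..<Suc k} \<rightarrow>\<^sub>E A. G (\<lambda>s. card {q. q < Suc k \<and> tp (\<sigma> q) = s}))
     = (\<Sum>p\<in>A \<times> ({..<k} \<rightarrow>\<^sub>E A). G (\<lambda>s. card {q. q < Suc k \<and> tp (((\<lambda>(y, g). g(k := y)) p) q) = s}))"
    unfolding lessThan_Suc PiE_insert_eq
    by (subst sum.reindex) (auto intro!: inj_combinator)
  also have "\<dots> = (\<Sum>a\<in>A. \<Sum>\<sigma>\<in>{..<k} \<rightarrow>\<^sub>E A. G ((cnt \<sigma>)(tp a := cnt \<sigma> (tp a) + 1)))"
    by (subst sum.cartesian_product) (rule sum.cong; clarsimp simp: cnt_upd simp del: fun_upd_apply)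
  also have "\<dots> = (\<Sum>a\<in>A. (\<lambda>s. \<Sum>K\<in>Pk k. multinom k K * (\<Prod>t\<in>UNIV. c t ^ K t) * G (K(s := K s + 1))) (tp a))"
    unfolding cnt_def c_def by (rule sum.cong, simp, rule Suc.IH)
  also have "\<dots> = (\<Sum>s\<in>UNIV. c s * (\<Sum>K\<in>Pk k. multinom k K * (\<Prod>t\<in>UNIV. c t ^ K t) * G (K(s := K s + 1))))"
    unfolding c_def by (rule group_typ[OF fin])
  also have "\<dots> = (\<Sum>s\<in>UNIV. \<Sum>K'\<in>Pk (Suc k). of_nat (K' s) * (fact k / (\<Prod>t\<in>UNIV. fact (K' t))) * (\<Prod>t\<in>UNIV. c t ^ K' t) * G K')"
    by (simp only: key)
  also have "\<dots> = (\<Sum>K'\<in>Pk (Suc k). (\<Sum>s\<in>UNIV. of_nat (K' s)) * (fact k / (\<Prod>t\<in>UNIV. fact (K' t))) * (\<Prod>t\<in>UNIV. c t ^ K' t) * G K')"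
    by (subst sum.swap) (simp add: sum_distrib_right sum_divide_distrib)
  also have "\<dots> = (\<Sum>K'\<in>Pk (Suc k). multinom (Suc k) K' * (\<Prod>t\<in>UNIV. c t ^ K' t) * G K')"
  proof (rule sum.cong)
    fix K' assume "K' \<in> Pk (Suc k)"
    hence "(\<Sum>s\<in>UNIV. (of_nat (K' s) :: complex)) = of_nat (Suc k)" unfolding Pk_def
      by (metis (mono_tags) mem_Collect_eq of_nat_sum)
    thus "(\<Sum>s\<in>UNIV. of_nat (K' s)) * (fact k / (\<Prod>t\<in>UNIV. fact (K' t))) * (\<Prod>t\<in>UNIV. c t ^ K' t) * G K'
        = multinom (Suc k) K' * (\<Prod>t\<in>UNIV. c t ^ K' t) * G K'"
      unfolding multinom_def by (simp add: fact_Suc)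
  qed simp
  finally show ?case unfolding c_def .
qed

theorem mainTheorem7:
  fixes k n :: nat and f :: "nat \<Rightarrow> nat \<Rightarrow> nat \<Rightarrow> complex"
    and z1 z0 zm :: "nat \<Rightarrow> bool"
  assumes "k \<ge> 1" and "n \<ge> 1"
  shows "E_clause n k (\<lambda>\<sigma>. f (clause_sum k z1 \<sigma>) (clause_sum k z0 \<sigma>) (clause_sum k zm \<sigma>))
    = (1 / 2 ^ k) * (\<Sum>K\<in>Pk k. multinom k K *
        (\<Prod>s\<in>UNIV. ((of_nat (config_num n z1 z0 zm s) + of_nat (config_num n z1 z0 zm (bcomp s)))
                        / of_nat n) ^ K s) *
        f (\<Sum>s\<in>{s. fst s}. K s) (\<Sum>s\<in>{s. fst (snd s)}. K s) (\<Sum>s\<in>{s. snd (snd s)}. K s))"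
proof -
  define tp :: "nat \<times> bool \<Rightarrow> bit3" where "tp p = (z1 (fst p) \<noteq> snd p, z0 (fst p) \<noteq> snd p, zm (fst p) \<noteq> snd p)" for p
  define A where "A = {..<n} \<times> (UNIV :: bool set)"
  define G where "G K = f (\<Sum>s\<in>{s. fst s}. K s) (\<Sum>s\<in>{s. fst (snd s)}. K s) (\<Sum>s\<in>{s. snd (snd s)}. K s)" for K :: "bit3 \<Rightarrow> nat"
  define c where "c s = (of_nat (card {a\<in>A. tp a = s}) :: complex)" for s
  have finA: "finite A" unfolding A_def by simp
  have cardcl: "card (clauses n k) = (2 * n) ^ k"
    unfolding clauses_def by (simp add: card_PiE card_cartesian_product)
  have cs: "c s = of_nat (config_num n z1 z0 zm s) + of_nat (config_num n z1 z0 zm (bcomp s))" for s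
  proof -
    obtain a b d where s: "s = (a, b, d)" by (cases s) auto
    have e: "{p\<in>A. tp p = s} = (\<lambda>l. (l, False)) ` {j. j < n \<and> (z1 j, z0 j, zm j) = s}
        \<union> (\<lambda>l. (l, True)) ` {j. j < n \<and> (z1 j, z0 j, zm j) = bcomp s}"
      unfolding A_def tp_def s bcomp_def by (auto simp: image_iff)
    have "card {p\<in>A. tp p = s} = config_num n z1 z0 zm s + config_num n z1 z0 zm (bcomp s)"
      unfolding e config_num_def
      by (subst card_Un_disjoint) (auto simp: card_image inj_on_def)
    thus ?thesis unfolding c_def by simp
  qed
  have F: "f (clause_sum k z1 \<sigma>) (clause_sum k z0 \<sigma>) (clause_sum k zm \<sigma>)
      = G (\<lambda>s. card {q. q < k \<and> tp (\<sigma> q) = s})" for \<sigma>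
  proof -
    have "clause_sum k z1 \<sigma> = (\<Sum>q<k. of_bool (fst (tp (\<sigma> q))))"
      "clause_sum k z0 \<sigma> = (\<Sum>q<k. of_bool (fst (snd (tp (\<sigma> q)))))"
      "clause_sum k zm \<sigma> = (\<Sum>q<k. of_bool (snd (snd (tp (\<sigma> q)))))"
      unfolding clause_sum_def tp_def by simp_all
    thus ?thesis unfolding G_def
      using count_sum[of fst "\<lambda>q. tp (\<sigma> q)" k] count_sum[of "\<lambda>s. fst (snd s)" "\<lambda>q. tp (\<sigma> q)" k]
        count_sum[of "\<lambda>s. snd (snd s)" "\<lambda>q. tp (\<sigma> q)" k] by simp
  qed
  have pw: "(\<Prod>s\<in>UNIV. (c s / of_nat n) ^ K s) = (\<Prod>s\<in>UNIV. c s ^ K s) / of_nat n ^ k" if "K \<in> Pk k" for K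
  proof -
    have "(\<Prod>s\<in>UNIV. (of_nat n :: complex) ^ K s) = of_nat n ^ k"
      using that unfolding Pk_def by (simp add: power_sum[symmetric])
    thus ?thesis by (simp add: power_divide prod_dividef)
  qed
  have "E_clause n k (\<lambda>\<sigma>. f (clause_sum k z1 \<sigma>) (clause_sum k z0 \<sigma>) (clause_sum k zm \<sigma>))
     = (\<Sum>K\<in>Pk k. multinom k K * (\<Prod>t\<in>UNIV. c t ^ K t) * G K) / of_nat ((2 * n) ^ k)"
    unfolding E_clause_def F cardcl
    unfolding clauses_def A_def[symmetric] c_def by (subst multi[OF finA]) simp
  also have "\<dots> = (1 / 2 ^ k) * (\<Sum>K\<in>Pk k. multinom k K * (\<Prod>s\<in>UNIV. (c s / of_nat n) ^ K s) * G K)"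
  proof -
    have "(\<Sum>K\<in>Pk k. multinom k K * (\<Prod>s\<in>UNIV. (c s / of_nat n) ^ K s) * G K)
        = (\<Sum>K\<in>Pk k. multinom k K * (\<Prod>t\<in>UNIV. c t ^ K t) * G K / of_nat n ^ k)"
      by (rule sum.cong) (simp_all add: pw)
    thus ?thesis by (simp add: sum_divide_distrib[symmetric] power_mult_distrib)
  qed
  finally show ?thesis unfolding cs G_def .
qed

end
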